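(* Let $A_S$ be a parabolic-retractable Artin group with Coxeter matrix $(m_{s,t})_{s,t\in S}$, and let $a,b,c\in S$ be pairwise distinct. If $m_{a,b}$ is odd and $m_{a,c}$ is even, then $m_{b,c}$ is even.
   Context: A Coxeter matrix over a finite set $S$ is a matrix $M=(m_{s,t})_{s,t\in S}$ with entries in $\mathbb{N}\cup\{\infty\}$, $m_{s,s}=1$, and $m_{s,t}=m_{t,s}\ge 2$ for $s\neq t$. Write $\Pi(s,t,m)$ for the alternating word $sts\cdots$ of length $m$. The Artin group is $A_S=\langle S\mid \Pi(s,t,m_{s,t})=\Pi(t,s,m_{s,t})$ for $s\neq t$, $m_{s,t}\neq\infty\rangle$. For $X\subseteq S$, $A_X$ is the subgroup generated by $X$. A retraction of $G$ onto a subgroup $H$ is a homomorphism $\varphi:G\to H$ with $\varphi|_H=\mathrm{id}_H$. $A_S$ is parabolic-retractable if it admits a retraction onto $A_X$ for every $X\subseteq S$. "Odd" and "even" refer to finite integers ($\infty$ is neither). *)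

theory Defs
  imports "HOL-Algebra.Generated_Groups" "HOL-Library.Extended_Nat"
begin

definition coxeter_matrix :: "'s set \<Rightarrow> ('s \<Rightarrow> 's \<Rightarrow> enat) \<Rightarrow> bool" where
  "coxeter_matrix S M \<longleftrightarrow> finite S \<and> (\<forall>s\<in>S. M s s = 1) \<and>
     (\<forall>s\<in>S. \<forall>t\<in>S. s \<noteq> t \<longrightarrow> M s t = M t s \<and> M s t \<ge> 2)"

definition odd_entry :: "enat \<Rightarrow> bool" where
  "odd_entry m \<longleftrightarrow> (\<exists>k. m = enat k \<and> odd k)"
definition even_entry :: "enat \<Rightarrow> bool" where
  "even_entry m \<longleftrightarrow> (\<exists>k. m = enat k \<and> even k)"

text \<open>Words in the generators and their inverses: (s, True) = s, (s, False) = s^-1.\<close>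
type_synonym 's word = "('s \<times> bool) list"

definition words :: "'s set \<Rightarrow> 's word set" where
  "words S = lists (S \<times> UNIV)"

definition alt_word :: "'s \<Rightarrow> 's \<Rightarrow> nat \<Rightarrow> 's word" where
  "alt_word s t m = map (\<lambda>i. (if even i then s else t, True)) [0..<m]"

inductive artin_rel :: "'s set \<Rightarrow> ('s \<Rightarrow> 's \<Rightarrow> enat) \<Rightarrow> 's word \<Rightarrow> 's word \<Rightarrow> bool"
  for S M where
  refl: "w \<in> words S \<Longrightarrow> artin_rel S M w w"
| sym: "artin_rel S M u v \<Longrightarrow> artin_rel S M v u"
| trans: "artin_rel S M u v \<Longrightarrow> artin_rel S M v w \<Longrightarrow> artin_rel S M u w"
| free: "u \<in> words S \<Longrightarrow> v \<in> words S \<Longrightarrow> s \<in> S \<Longrightarrow>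
         artin_rel S M (u @ [(s, e), (s, \<not> e)] @ v) (u @ v)"
| braid: "u \<in> words S \<Longrightarrow> v \<in> words S \<Longrightarrow> s \<in> S \<Longrightarrow> t \<in> S \<Longrightarrow> s \<noteq> t \<Longrightarrow>
          M s t = enat k \<Longrightarrow>
          artin_rel S M (u @ alt_word s t k @ v) (u @ alt_word t s k @ v)"

definition artin_class :: "'s set \<Rightarrow> ('s \<Rightarrow> 's \<Rightarrow> enat) \<Rightarrow> 's word \<Rightarrow> 's word set" where
  "artin_class S M w = {v. artin_rel S M w v}"

definition artin_group :: "'s set \<Rightarrow> ('s \<Rightarrow> 's \<Rightarrow> enat) \<Rightarrow> 's word set monoid" where
  "artin_group S M =
     \<lparr> carrier = artin_class S M ` words S,
       mult = (\<lambda>A B. \<Union>a\<in>A. \<Union>b\<in>B. artin_class S M (a @ b)),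
       one = artin_class S M [] \<rparr>"

definition artin_gen :: "'s set \<Rightarrow> ('s \<Rightarrow> 's \<Rightarrow> enat) \<Rightarrow> 's \<Rightarrow> 's word set" where
  "artin_gen S M s = artin_class S M [(s, True)]"

definition parabolic :: "'s set \<Rightarrow> ('s \<Rightarrow> 's \<Rightarrow> enat) \<Rightarrow> 's set \<Rightarrow> 's word set set" where
  "parabolic S M X = generate (artin_group S M) (artin_gen S M ` X)"

definition is_retraction :: "('a, 'b) monoid_scheme \<Rightarrow> 'a set \<Rightarrow> ('a \<Rightarrow> 'a) \<Rightarrow> bool" where
  "is_retraction G H \<phi> \<longleftrightarrow> \<phi> \<in> hom G G \<and> \<phi> ` carrier G \<subseteq> H \<and> (\<forall>h\<in>H. \<phi> h = h)"

definition parabolic_retractable :: "'s set \<Rightarrow> ('s \<Rightarrow> 's \<Rightarrow> enat) \<Rightarrow> bool" where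
  "parabolic_retractable S M \<longleftrightarrow>
     (\<forall>X \<subseteq> S. \<exists>\<phi>. is_retraction (artin_group S M) (parabolic S M X) \<phi>)"

end

theory Submission
  imports Defs
begin


lemma alt_word_Suc: "alt_word s t (Suc n) = (s, True) # alt_word t s n"
  unfolding alt_word_def by (induct n) (auto simp: map_upt_Suc simp del: upt_Suc)

lemma alt_word_set: "set (alt_word s t n) \<subseteq> {s, t} \<times> UNIV"
  unfolding alt_word_def by auto

lemma rel_words: "artin_rel S M u v \<Longrightarrow> u \<in> words S \<and> v \<in> words S"
proof (induction rule: artin_rel.induct)
  case (braid u v s t k)
  then show ?case using alt_word_set[of s t k] alt_word_set[of t s k]
    by (auto simp: words_def)
qed (auto simp: words_def)

lemma rel_app_right: "artin_rel S M u v \<Longrightarrow> w \<in> words S \<Longrightarrow> artin_rel S M (u @ w) (v @ w)"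
proof (induction rule: artin_rel.induct)
  case (refl w') then show ?case by (auto intro: artin_rel.refl simp: words_def)
next
  case (sym u v) then show ?case by (auto intro: artin_rel.sym)
next
  case (trans u v w') then show ?case by (auto intro: artin_rel.trans)
next
  case (free u v s e) then show ?case
    using artin_rel.free[of u S "v @ w" s M e] by (simp add: words_def)
next
  case (braid u v s t k) then show ?case
    using artin_rel.braid[of u S "v @ w" s t M k] by (simp add: words_def)
qed

lemma rel_app_left: "artin_rel S M u v \<Longrightarrow> w \<in> words S \<Longrightarrow> artin_rel S M (w @ u) (w @ v)"
proof (induction rule: artin_rel.induct)
  case (refl w') then show ?case by (auto intro: artin_rel.refl simp: words_def)
next
  case (sym u v) then show ?case by (auto intro: artin_rel.sym)
next
  case (trans u v w') then show ?case by (auto intro: artin_rel.trans)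
next
  case (free u v s e) then show ?case
    using artin_rel.free[of "w @ u" S v s M e] by (simp add: words_def)
next
  case (braid u v s t k) then show ?case
    using artin_rel.braid[of "w @ u" S v s t M k] by (simp add: words_def)
qed

lemma rel_app: "artin_rel S M u u' \<Longrightarrow> artin_rel S M v v' \<Longrightarrow> artin_rel S M (u @ v) (u' @ v')"
  by (meson artin_rel.trans rel_app_left rel_app_right rel_words)

lemma class_eq: "artin_rel S M u v \<Longrightarrow> artin_class S M u = artin_class S M v"
proof -
  assume r: "artin_rel S M u v"
  have "artin_rel S M u w \<longleftrightarrow> artin_rel S M v w" for w
    using r artin_rel.trans[of S M u v w] artin_rel.trans[of S M v u w] artin_rel.sym[OF r] by blast
  then show ?thesis unfolding artin_class_def by blast
qed

lemma class_mem: "u \<in> words S \<Longrightarrow> u \<in> artin_class S M u"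
  unfolding artin_class_def by (simp add: artin_rel.refl)

lemma mult_class: "u \<in> words S \<Longrightarrow> v \<in> words S \<Longrightarrow>
  artin_class S M u \<otimes>\<^bsub>artin_group S M\<^esub> artin_class S M v = artin_class S M (u @ v)"
proof -
  assume u: "u \<in> words S" and v: "v \<in> words S"
  have eq: "\<And>a b. a \<in> artin_class S M u \<Longrightarrow> b \<in> artin_class S M v \<Longrightarrow>
     artin_class S M (a @ b) = artin_class S M (u @ v)"
  proof -
    fix a b assume "a \<in> artin_class S M u" "b \<in> artin_class S M v"
    then have "artin_rel S M u a" "artin_rel S M v b" by (simp_all add: artin_class_def)
    then have "artin_rel S M (u @ v) (a @ b)" by (rule rel_app)
    then show "artin_class S M (a @ b) = artin_class S M (u @ v)"
      by (metis class_eq)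
  qed
  have "(\<Union>a\<in>artin_class S M u. \<Union>b\<in>artin_class S M v. artin_class S M (a @ b)) = artin_class S M (u @ v)"
  proof
    show "(\<Union>a\<in>artin_class S M u. \<Union>b\<in>artin_class S M v. artin_class S M (a @ b)) \<subseteq> artin_class S M (u @ v)"
      using eq by blast
    show "artin_class S M (u @ v) \<subseteq> (\<Union>a\<in>artin_class S M u. \<Union>b\<in>artin_class S M v. artin_class S M (a @ b))"
      using class_mem[OF u, of M] class_mem[OF v, of M] by blast
  qed
  then show ?thesis unfolding artin_group_def by simp
qed

lemma words_app: "u \<in> words S \<Longrightarrow> v \<in> words S \<Longrightarrow> u @ v \<in> words S"
  by (simp add: words_def)

lemma carrier_ag: "carrier (artin_group S M) = artin_class S M ` words S"
  by (simp add: artin_group_def)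

lemma one_ag: "\<one>\<^bsub>artin_group S M\<^esub> = artin_class S M []"
  by (simp add: artin_group_def)

lemma monoid_ag: "monoid (artin_group S M)"
proof (rule monoidI)
  fix x y assume "x \<in> carrier (artin_group S M)" "y \<in> carrier (artin_group S M)"
  then show "x \<otimes>\<^bsub>artin_group S M\<^esub> y \<in> carrier (artin_group S M)"
    by (auto simp: carrier_ag mult_class words_app)
next
  show "\<one>\<^bsub>artin_group S M\<^esub> \<in> carrier (artin_group S M)"
    by (auto simp: carrier_ag one_ag words_def)
next
  fix x y z assume "x \<in> carrier (artin_group S M)" "y \<in> carrier (artin_group S M)"
    "z \<in> carrier (artin_group S M)"
  then show "x \<otimes>\<^bsub>artin_group S M\<^esub> y \<otimes>\<^bsub>artin_group S M\<^esub> z =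
     x \<otimes>\<^bsub>artin_group S M\<^esub> (y \<otimes>\<^bsub>artin_group S M\<^esub> z)"
    by (auto simp: carrier_ag mult_class words_app)
next
  fix x assume "x \<in> carrier (artin_group S M)"
  then show "\<one>\<^bsub>artin_group S M\<^esub> \<otimes>\<^bsub>artin_group S M\<^esub> x = x"
  proof -
    from \<open>x \<in> carrier (artin_group S M)\<close> obtain u where u: "u \<in> words S" "x = artin_class S M u"
      by (auto simp: carrier_ag)
    have nil: "[] \<in> words S" by (simp add: words_def)
    show ?thesis using mult_class[OF nil u(1), of M] u(2) by (simp add: one_ag)
  qed
next
  fix x assume "x \<in> carrier (artin_group S M)"
  then show "x \<otimes>\<^bsub>artin_group S M\<^esub> \<one>\<^bsub>artin_group S M\<^esub> = x"
  proof -
    from \<open>x \<in> carrier (artin_group S M)\<close> obtain u where u: "u \<in> words S" "x = artin_class S M u"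
      by (auto simp: carrier_ag)
    have nil: "[] \<in> words S" by (simp add: words_def)
    show ?thesis using mult_class[OF u(1) nil, of M] u(2) by (simp add: one_ag)
  qed
qed

lemma gen_inv:
  assumes "x \<in> S"
  shows "artin_gen S M x \<in> Units (artin_group S M)"
    and "inv\<^bsub>artin_group S M\<^esub> (artin_gen S M x) = artin_class S M [(x, False)]"
proof -
  interpret monoid "artin_group S M" by (rule monoid_ag)
  have w1: "[(x, True)] \<in> words S" and w2: "[(x, False)] \<in> words S" using assms by (auto simp: words_def)
  have r1: "artin_rel S M [(x, True), (x, False)] []"
    using artin_rel.free[of "[]" S "[]" x M True] assms by (simp add: words_def)
  have r2: "artin_rel S M [(x, False), (x, True)] []"
    using artin_rel.free[of "[]" S "[]" x M False] assms by (simp add: words_def)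
  have p1: "artin_gen S M x \<otimes>\<^bsub>artin_group S M\<^esub> artin_class S M [(x, False)] = \<one>\<^bsub>artin_group S M\<^esub>"
    using mult_class[OF w1 w2, of M] class_eq[OF r1] by (simp add: artin_gen_def one_ag)
  have p2: "artin_class S M [(x, False)] \<otimes>\<^bsub>artin_group S M\<^esub> artin_gen S M x = \<one>\<^bsub>artin_group S M\<^esub>"
    using mult_class[OF w2 w1, of M] class_eq[OF r2] by (simp add: artin_gen_def one_ag)
  have c1: "artin_gen S M x \<in> carrier (artin_group S M)" using w1 by (simp add: carrier_ag artin_gen_def)
  have c2: "artin_class S M [(x, False)] \<in> carrier (artin_group S M)" using w2 by (simp add: carrier_ag)
  show u: "artin_gen S M x \<in> Units (artin_group S M)"
    unfolding Units_def using p1 p2 c1 c2 by blast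
  show "inv\<^bsub>artin_group S M\<^esub> (artin_gen S M x) = artin_class S M [(x, False)]"
    using inv_unique[OF Units_l_inv[OF u] p1] u c2 by auto
qed



definition gv :: "enat \<Rightarrow> real" where
  "gv x = (case x of enat m \<Rightarrow> if odd m then - cos (pi / real m) else 0 | \<infinity> \<Rightarrow> -1)"

definition Gm :: "('s \<Rightarrow> 's \<Rightarrow> enat) \<Rightarrow> 's \<Rightarrow> 's \<Rightarrow> real" where
  "Gm M s t = (if s = t then 1 else gv (M s t))"

definition ev :: "'s \<Rightarrow> 's \<Rightarrow> real" where
  "ev s = (\<lambda>x. if x = s then 1 else 0)"

definition Lf :: "'s set \<Rightarrow> ('s \<Rightarrow> 's \<Rightarrow> enat) \<Rightarrow> 's \<Rightarrow> ('s \<Rightarrow> real) \<Rightarrow> real" where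
  "Lf S M s v = (\<Sum>t\<in>S. Gm M s t * v t)"

definition sig :: "'s set \<Rightarrow> ('s \<Rightarrow> 's \<Rightarrow> enat) \<Rightarrow> 's \<Rightarrow> ('s \<Rightarrow> real) \<Rightarrow> ('s \<Rightarrow> real)" where
  "sig S M s v = (\<lambda>x. v x - 2 * Lf S M s v * ev s x)"

fun act :: "'s set \<Rightarrow> ('s \<Rightarrow> 's \<Rightarrow> enat) \<Rightarrow> 's word \<Rightarrow> ('s \<Rightarrow> real) \<Rightarrow> ('s \<Rightarrow> real)" where
  "act S M [] = id"
| "act S M (p # w) = sig S M (fst p) \<circ> act S M w"

fun altc :: "('a \<Rightarrow> 'a) \<Rightarrow> ('a \<Rightarrow> 'a) \<Rightarrow> nat \<Rightarrow> 'a \<Rightarrow> 'a" where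
  "altc f g 0 = id"
| "altc f g (Suc n) = f \<circ> altc g f n"

definition lin :: "(('s \<Rightarrow> real) \<Rightarrow> ('s \<Rightarrow> real)) \<Rightarrow> bool" where
  "lin f \<longleftrightarrow> (\<forall>a b u v. f (\<lambda>x. a * u x + b * v x) = (\<lambda>x. a * f u x + b * f v x))"

lemma Lf_ev: "finite S \<Longrightarrow> t \<in> S \<Longrightarrow> Lf S M s (ev t) = Gm M s t"
  unfolding Lf_def ev_def by (simp add: if_distrib cong: if_cong)

lemma Lf_lin: "Lf S M s (\<lambda>x. a * u x + b * v x) = a * Lf S M s u + b * Lf S M s v"
  unfolding Lf_def by (simp add: algebra_simps sum.distrib sum_distrib_left)

lemma Lf_sig: "finite S \<Longrightarrow> s \<in> S \<Longrightarrow>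
  Lf S M u (sig S M s v) = Lf S M u v - 2 * Lf S M s v * Gm M u s"
proof -
  assume fin: "finite S" and s: "s \<in> S"
  have "sig S M s v = (\<lambda>x. 1 * v x + (- 2 * Lf S M s v) * ev s x)"
    unfolding sig_def by auto
  then show ?thesis using Lf_lin[of S M u 1 v "- 2 * Lf S M s v" "ev s"] Lf_ev[OF fin s] by simp
qed

lemma Gm_self: "Gm M s s = 1" by (simp add: Gm_def)

lemma sig_invol: "finite S \<Longrightarrow> s \<in> S \<Longrightarrow> sig S M s (sig S M s v) = v"
proof -
  assume fin: "finite S" and s: "s \<in> S"
  have "Lf S M s (sig S M s v) = - Lf S M s v" using Lf_sig[OF fin s, of M s v] by (simp add: Gm_self)
  then show ?thesis unfolding sig_def[of S M s "sig S M s v"] by (simp add: sig_def)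
qed

lemma sig_invol': "finite S \<Longrightarrow> s \<in> S \<Longrightarrow> sig S M s \<circ> sig S M s = id"
  by (simp add: fun_eq_iff sig_invol)

lemma sig_lin: "lin (sig S M s)"
  unfolding lin_def sig_def by (auto simp: Lf_lin algebra_simps)

lemma lin_comp: "lin f \<Longrightarrow> lin g \<Longrightarrow> lin (f \<circ> g)"
  unfolding lin_def by simp

lemma lin_id: "lin id" unfolding lin_def by simp

lemma act_lin: "lin (act S M w)"
proof (induct w)
  case Nil then show ?case by (simp only: act.simps lin_id)
next
  case (Cons p w) then show ?case by (simp only: act.simps) (rule lin_comp[OF sig_lin])
qed

lemma act_app: "act S M (u @ v) = act S M u \<circ> act S M v"
  by (induct u) auto

lemma act_alt: "act S M (alt_word s t n) = altc (sig S M s) (sig S M t) n"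
  by (induct n arbitrary: s t) (simp_all add: alt_word_Suc alt_word_def[of _ _ 0])

lemma altc_SS: "altc f g (Suc (Suc n)) = f \<circ> g \<circ> altc f g n"
  by (simp add: o_assoc)

lemma altc_even: "altc f g (2 * j) = (f \<circ> g) ^^ j"
proof (induct j)
  case 0 then show ?case by simp
next
  case (Suc j)
  have e1: "2 * Suc j = Suc (Suc (2 * j))" by simp
  show ?case unfolding e1 altc_SS Suc funpow.simps(2) by simp
qed

lemma altc_odd: "altc f g (2 * j + 1) = (f \<circ> g) ^^ j \<circ> f"
proof (induct j)
  case 0 then show ?case by simp
next
  case (Suc j)
  have e1: "2 * Suc j + 1 = Suc (Suc (2 * j + 1))" by simp
  show ?case unfolding e1 altc_SS Suc funpow.simps(2) by (simp add: o_assoc)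
qed

lemma altc_closed: "altc f g (2 * j) = (f \<circ> g) ^^ j \<and> altc f g (2 * j + 1) = (f \<circ> g) ^^ j \<circ> f"
  using altc_even altc_odd by blast

lemma funpow_comm: "f \<circ> g = g \<circ> f \<Longrightarrow> (f \<circ> g) ^^ j = (g \<circ> f) ^^ j"
  by simp

lemma braid_even:
  assumes fin: "finite S" and s: "s \<in> S" and t: "t \<in> S" and g1: "Gm M s t = 0" and g2: "Gm M t s = 0"
    and ev: "even k"
  shows "altc (sig S M s) (sig S M t) k = altc (sig S M t) (sig S M s) k"
proof -
  have comm: "sig S M s \<circ> sig S M t = sig S M t \<circ> sig S M s"
  proof
    fix v
    have a: "Lf S M s (sig S M t v) = Lf S M s v" using Lf_sig[OF fin t, of M s v] g1 by simp
    have b: "Lf S M t (sig S M s v) = Lf S M t v" using Lf_sig[OF fin s, of M t v] g2 by simp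
    show "(sig S M s \<circ> sig S M t) v = (sig S M t \<circ> sig S M s) v"
      unfolding o_def sig_def[of S M s "sig S M t v"] sig_def[of S M t "sig S M s v"] a b
      by (simp add: sig_def fun_eq_iff algebra_simps)
  qed
  obtain j where k: "k = 2 * j" using ev by blast
  show ?thesis unfolding k using altc_closed[of "sig S M s" "sig S M t" j] altc_closed[of "sig S M t" "sig S M s" j] comm
    by simp
qed



definition R2 :: "real \<Rightarrow> real \<times> real \<Rightarrow> real \<times> real" where
  "R2 c = (\<lambda>(x, y). (- x - 2 * c * y, - y + 2 * c * (x + 2 * c * y)))"

lemma sin_rec: "sin ((real n + 1) * \<phi>) = 2 * cos \<phi> * sin (real n * \<phi>) - sin ((real n - 1) * \<phi>)"
proof -
  have a: "(real n + 1) * \<phi> = real n * \<phi> + \<phi>" by (simp add: algebra_simps)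
  have b: "(real n - 1) * \<phi> = real n * \<phi> - \<phi>" by (simp add: algebra_simps)
  show ?thesis unfolding a b sin_add sin_diff by (simp add: algebra_simps)
qed

lemma cheb:
  assumes cphi: "cos \<phi> = 2 * c ^ 2 - 1"
  shows "sin \<phi> * fst ((R2 c ^^ n) p) = sin (real n * \<phi>) * fst (R2 c p) - sin ((real n - 1) * \<phi>) * fst p
       \<and> sin \<phi> * snd ((R2 c ^^ n) p) = sin (real n * \<phi>) * snd (R2 c p) - sin ((real n - 1) * \<phi>) * snd p"
proof (induct n)
  case 0
  have "(real 0 - 1) * \<phi> = - \<phi>" by simp
  then show ?case by simp
next
  case (Suc n)
  obtain x y where p: "p = (x, y)" by (cases p)
  obtain X Y where q: "(R2 c ^^ n) p = (X, Y)" by (cases "(R2 c ^^ n) p")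
  define A where "A = sin (real n * \<phi>)"
  define B where "B = sin ((real n - 1) * \<phi>)"
  define A' where "A' = sin ((real n + 1) * \<phi>)"
  have rec: "A' = 2 * cos \<phi> * A - B" unfolding A'_def A_def B_def by (rule sin_rec)
  have h1: "sin \<phi> * X = A * (- x - 2 * c * y) - B * x"
    using Suc q p unfolding A_def B_def by (simp add: R2_def)
  have h2: "sin \<phi> * Y = A * (- y + 2 * c * (x + 2 * c * y)) - B * y"
    using Suc q p unfolding A_def B_def by (simp add: R2_def)
  have s1: "real (Suc n) = real n + 1" by simp
  have s2: "real (Suc n) - 1 = real n" by simp
  have g1: "sin \<phi> * (- X - 2 * c * Y) = A' * (- x - 2 * c * y) - A * x"
    using h1 h2 rec cphi by algebra
  have g2: "sin \<phi> * (- Y + 2 * c * (X + 2 * c * Y)) = A' * (- y + 2 * c * (x + 2 * c * y)) - A * y"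
    using h1 h2 rec cphi by algebra
  have st: "(R2 c ^^ Suc n) p = (- X - 2 * c * Y, - Y + 2 * c * (X + 2 * c * Y))"
    using q by (simp add: R2_def)
  have rp: "R2 c p = (- x - 2 * c * y, - y + 2 * c * (x + 2 * c * y))"
    using p by (simp add: R2_def)
  show ?case unfolding s1 s2 st rp
    using g1 g2 p unfolding A'_def A_def by simp
qed

lemma R2_pow:
  assumes m: "m \<ge> 3"
  shows "(R2 (cos (pi / real m)) ^^ m) p = p"
proof -
  define c where "c = cos (pi / real m)"
  define \<phi> where "\<phi> = 2 * (pi / real m)"
  have cphi: "cos \<phi> = 2 * c ^ 2 - 1" unfolding \<phi>_def c_def by (rule cos_double_cos)
  have mpos: "real m > 0" using m by simp
  have p0: "0 < \<phi>" unfolding \<phi>_def using mpos by simp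
  have p1: "\<phi> < pi" unfolding \<phi>_def using m by (simp add: field_simps)
  have sp: "sin \<phi> > 0" using sin_gt_zero[OF p0 p1] .
  have a: "real m * \<phi> = 2 * pi" unfolding \<phi>_def using mpos by (simp add: field_simps)
  have b: "(real m - 1) * \<phi> = 2 * pi - \<phi>" using a by (simp add: algebra_simps)
  have sa: "sin (real m * \<phi>) = 0" unfolding a by simp
  have sb: "sin ((real m - 1) * \<phi>) = - sin \<phi>" unfolding b by (simp add: sin_diff)
  have "sin \<phi> * fst ((R2 c ^^ m) p) = sin \<phi> * fst p \<and> sin \<phi> * snd ((R2 c ^^ m) p) = sin \<phi> * snd p"
    using cheb[OF cphi, of m p] sa sb by simp
  then have "fst ((R2 c ^^ m) p) = fst p \<and> snd ((R2 c ^^ m) p) = snd p" using sp by simp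
  then show ?thesis unfolding c_def by (simp add: prod_eq_iff)
qed



lemma form_step:
  assumes "w = (\<lambda>x. v x + p * ev a x + q * ev b x)" and "u = a \<or> u = b"
  shows "\<exists>p' q'. sig S M u w = (\<lambda>x. v x + p' * ev a x + q' * ev b x)"
  using assms(2)
proof
  assume "u = a"
  then show ?thesis using assms(1)
    by (intro exI[of _ "p - 2 * Lf S M u w"] exI[of _ q]) (auto simp: sig_def fun_eq_iff algebra_simps)
next
  assume "u = b"
  then show ?thesis using assms(1)
    by (intro exI[of _ p] exI[of _ "q - 2 * Lf S M u w"]) (auto simp: sig_def fun_eq_iff algebra_simps)
qed

lemma R_form: "\<exists>p q. ((sig S M s \<circ> sig S M t) ^^ n) v = (\<lambda>x. v x + p * ev s x + q * ev t x)"
proof (induct n)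
  case 0 show ?case by (intro exI[of _ 0]) simp
next
  case (Suc n)
  then obtain p q where h: "((sig S M s \<circ> sig S M t) ^^ n) v = (\<lambda>x. v x + p * ev s x + q * ev t x)" by blast
  obtain p1 q1 where h1: "sig S M t (((sig S M s \<circ> sig S M t) ^^ n) v) = (\<lambda>x. v x + p1 * ev s x + q1 * ev t x)"
    using form_step[OF h, where u=t and S=S and M=M] by blast
  obtain p2 q2 where h2: "sig S M s (sig S M t (((sig S M s \<circ> sig S M t) ^^ n) v)) = (\<lambda>x. v x + p2 * ev s x + q2 * ev t x)"
    using form_step[OF h1, where u=s and S=S and M=M] by blast
  have e: "((sig S M s \<circ> sig S M t) ^^ Suc n) v = sig S M s (sig S M t (((sig S M s \<circ> sig S M t) ^^ n) v))"
    by (simp only: funpow.simps(2) o_apply)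
  show ?case unfolding e h2 by blast
qed

lemma K_R:
  assumes fin: "finite S" and s: "s \<in> S" and t: "t \<in> S"
    and g1: "Gm M s t = - c" and g2: "Gm M t s = - c"
  shows "(Lf S M s ((sig S M s \<circ> sig S M t) v), Lf S M t ((sig S M s \<circ> sig S M t) v)) =
         R2 c (Lf S M s v, Lf S M t v)"
proof -
  have a1: "Lf S M s (sig S M t v) = Lf S M s v + 2 * c * Lf S M t v" using Lf_sig[OF fin t, of M s v] g1 by simp
  have a2: "Lf S M t (sig S M t v) = - Lf S M t v" using Lf_sig[OF fin t, of M t v] by (simp add: Gm_self)
  have b1: "Lf S M s (sig S M s (sig S M t v)) = - Lf S M s (sig S M t v)"
    using Lf_sig[OF fin s, of M s "sig S M t v"] by (simp add: Gm_self)
  have b2: "Lf S M t (sig S M s (sig S M t v)) = Lf S M t (sig S M t v) + 2 * c * Lf S M s (sig S M t v)"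
    using Lf_sig[OF fin s, of M t "sig S M t v"] g2 by simp
  show ?thesis unfolding o_apply b1 b2 a1 a2 R2_def by (simp add: algebra_simps)
qed

lemma K_Rn:
  assumes fin: "finite S" and s: "s \<in> S" and t: "t \<in> S"
    and g1: "Gm M s t = - c" and g2: "Gm M t s = - c"
  shows "(Lf S M s (((sig S M s \<circ> sig S M t) ^^ n) v), Lf S M t (((sig S M s \<circ> sig S M t) ^^ n) v)) =
         (R2 c ^^ n) (Lf S M s v, Lf S M t v)"
proof (induct n)
  case 0 then show ?case by simp
next
  case (Suc n)
  have e: "((sig S M s \<circ> sig S M t) ^^ Suc n) v = (sig S M s \<circ> sig S M t) (((sig S M s \<circ> sig S M t) ^^ n) v)"
    by (simp only: funpow.simps(2) o_apply)
  show ?case unfolding e K_R[OF assms, of "((sig S M s \<circ> sig S M t) ^^ n) v"] Suc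
    by (simp only: funpow.simps(2) o_apply)
qed

lemma Lf_3:
  assumes fin: "finite S" and s: "s \<in> S" and t: "t \<in> S"
  shows "Lf S M u (\<lambda>x. v x + p * ev s x + q * ev t x) = Lf S M u v + p * Gm M u s + q * Gm M u t"
proof -
  have e: "(\<lambda>x. v x + p * ev s x + q * ev t x) = (\<lambda>x. 1 * v x + 1 * (\<lambda>x. p * ev s x + q * ev t x) x)"
    by (simp add: algebra_simps)
  show ?thesis unfolding e Lf_lin Lf_ev[OF fin s] Lf_ev[OF fin t] by simp
qed

lemma R_pow_m:
  assumes fin: "finite S" and s: "s \<in> S" and t: "t \<in> S" and st: "s \<noteq> t"
    and g1: "Gm M s t = - cos (pi / real m)" and g2: "Gm M t s = - cos (pi / real m)"
    and m: "m \<ge> 3"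
  shows "((sig S M s \<circ> sig S M t) ^^ m) v = v"
proof -
  define c where "c = cos (pi / real m)"
  obtain p q where h: "((sig S M s \<circ> sig S M t) ^^ m) v = (\<lambda>x. v x + p * ev s x + q * ev t x)"
    using R_form[where S=S and M=M and s=s and t=t and n=m and v=v] by blast
  have K: "(Lf S M s (((sig S M s \<circ> sig S M t) ^^ m) v), Lf S M t (((sig S M s \<circ> sig S M t) ^^ m) v)) =
      (Lf S M s v, Lf S M t v)"
    using K_Rn[OF fin s t g1 g2, of m v] R2_pow[OF m] by simp
  have e1: "p - c * q = 0" using K unfolding h Lf_3[OF fin s t] using g1 by (simp add: Gm_self c_def)
  have e2: "q - c * p = 0" using K unfolding h Lf_3[OF fin s t] using g2 by (simp add: Gm_self c_def)
  have mpos: "real m > 0" using m by simp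
  have "0 < pi / real m" using mpos by simp
  moreover have "pi / real m < pi" using m by (simp add: field_simps)
  ultimately have "sin (pi / real m) > 0" by (rule sin_gt_zero)
  then have "sin (pi / real m) ^ 2 > 0" by simp
  then have c2: "c ^ 2 < 1" unfolding c_def using sin_cos_squared_add[of "pi / real m"] by linarith
  have "p * (1 - c ^ 2) = 0" using e1 e2 by algebra
  then have p0: "p = 0" using c2 by simp
  then have q0: "q = 0" using e2 by simp
  show ?thesis using h p0 q0 by simp
qed

lemma braid_odd:
  assumes fin: "finite S" and s: "s \<in> S" and t: "t \<in> S" and st: "s \<noteq> t"
    and g1: "Gm M s t = - cos (pi / real m)" and g2: "Gm M t s = - cos (pi / real m)"
    and m: "m \<ge> 3" and od: "odd m"
  shows "altc (sig S M s) (sig S M t) m = altc (sig S M t) (sig S M s) m"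
proof -
  define F where "F = sig S M s"
  define G where "G = sig S M t"
  have FF: "F \<circ> F = id" unfolding F_def by (rule sig_invol'[OF fin s])
  have GG: "G \<circ> G = id" unfolding G_def by (rule sig_invol'[OF fin t])
  have Rm: "(F \<circ> G) ^^ m = id" unfolding F_def G_def using R_pow_m[OF assms(1-7)] by (simp add: fun_eq_iff)
  have FFp: "F (F y) = y" for y using FF by (metis comp_apply id_apply)
  have GGp: "G (G y) = y" for y using GG by (metis comp_apply id_apply)
  have invp: "((G \<circ> F) ^^ n) (((F \<circ> G) ^^ n) x) = x" for n x
  proof (induct n arbitrary: x)
    case 0 then show ?case by simp
  next
    case (Suc n)
    have a: "(G \<circ> F) ^^ Suc n = (G \<circ> F) ^^ n \<circ> (G \<circ> F)" by (rule funpow_Suc_right)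
    have b: "(F \<circ> G) ^^ Suc n = (F \<circ> G) \<circ> (F \<circ> G) ^^ n" by (rule funpow.simps(2))
    show ?case unfolding a b by (simp only: o_apply FFp GGp Suc)
  qed
  have inv: "(G \<circ> F) ^^ n \<circ> (F \<circ> G) ^^ n = id" for n using invp by (simp add: fun_eq_iff)
  obtain j where mj: "m = 2 * j + 1" using od by (metis oddE)
  have "(G \<circ> F) ^^ j \<circ> G = (G \<circ> F) ^^ j \<circ> G \<circ> (F \<circ> F)" using FF by simp
  also have "\<dots> = (G \<circ> F) ^^ (Suc j) \<circ> F" by (simp only: funpow_Suc_right o_assoc)
  also have "\<dots> = (G \<circ> F) ^^ (Suc j) \<circ> ((F \<circ> G) ^^ (Suc j + j)) \<circ> F"
  proof -
    have "Suc j + j = m" using mj by simp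
    then have idm: "(F \<circ> G) ^^ (Suc j + j) = id" using Rm by simp
    show ?thesis unfolding idm by simp
  qed
  also have "\<dots> = ((G \<circ> F) ^^ (Suc j) \<circ> (F \<circ> G) ^^ (Suc j)) \<circ> (F \<circ> G) ^^ j \<circ> F"
    by (simp only: funpow_add o_assoc)
  also have "\<dots> = (F \<circ> G) ^^ j \<circ> F" unfolding inv[of "Suc j"] by simp
  finally have "(G \<circ> F) ^^ j \<circ> G = (F \<circ> G) ^^ j \<circ> F" .
  then show ?thesis unfolding mj altc_odd F_def G_def by simp
qed



lemma gv_sym: "coxeter_matrix S M \<Longrightarrow> s \<in> S \<Longrightarrow> t \<in> S \<Longrightarrow> Gm M s t = Gm M t s"
  unfolding coxeter_matrix_def Gm_def by auto

lemma braid_model: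
  assumes cox: "coxeter_matrix S M" and s: "s \<in> S" and t: "t \<in> S" and st: "s \<noteq> t"
    and k: "M s t = enat k"
  shows "altc (sig S M s) (sig S M t) k = altc (sig S M t) (sig S M s) k"
proof -
  have fin: "finite S" using cox by (simp add: coxeter_matrix_def)
  have k2: "k \<ge> 2" using cox s t st k unfolding coxeter_matrix_def
    by (metis enat_ord_simps(1) numeral_eq_enat)
  have g1: "Gm M s t = gv (enat k)" using st k by (simp add: Gm_def)
  have g2: "Gm M t s = gv (enat k)" using gv_sym[OF cox s t] g1 by simp
  show ?thesis
  proof (cases "odd k")
    case True
    then have k3: "k \<ge> 3" using k2 by presburger
    have "gv (enat k) = - cos (pi / real k)" using True by (simp add: gv_def)
    then show ?thesis using braid_odd[OF fin s t st _ _ k3 True] g1 g2 by simp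
  next
    case False
    then have "gv (enat k) = 0" by (simp add: gv_def)
    then show ?thesis using braid_even[OF fin s t _ _ ] g1 g2 False by simp
  qed
qed

lemma model_rel:
  assumes cox: "coxeter_matrix S M"
  shows "artin_rel S M u v \<Longrightarrow> act S M u = act S M v"
proof (induction rule: artin_rel.induct)
  case (free u v s e)
  have fin: "finite S" using cox by (simp add: coxeter_matrix_def)
  show ?case by (simp add: act_app o_def sig_invol[OF fin free(3)])
next
  case (braid u v s t k)
  then show ?case using braid_model[OF cox braid(3,4,5,6)] by (simp add: act_app act_alt)
qed auto

definition theta :: "'s set \<Rightarrow> ('s \<Rightarrow> 's \<Rightarrow> enat) \<Rightarrow> 's word set \<Rightarrow> ('s \<Rightarrow> real) \<Rightarrow> ('s \<Rightarrow> real)" where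
  "theta S M A = act S M (SOME w. w \<in> A)"

lemma theta_class:
  assumes cox: "coxeter_matrix S M" and u: "u \<in> words S"
  shows "theta S M (artin_class S M u) = act S M u"
proof -
  have "\<exists>w. w \<in> artin_class S M u" using class_mem[OF u] by blast
  then have "(SOME w. w \<in> artin_class S M u) \<in> artin_class S M u" by (rule someI_ex)
  then have "artin_rel S M u (SOME w. w \<in> artin_class S M u)" by (simp add: artin_class_def)
  then show ?thesis unfolding theta_def using model_rel[OF cox] by metis
qed

lemma theta_mult:
  assumes cox: "coxeter_matrix S M" and A: "A \<in> carrier (artin_group S M)" and B: "B \<in> carrier (artin_group S M)"
  shows "theta S M (A \<otimes>\<^bsub>artin_group S M\<^esub> B) = theta S M A \<circ> theta S M B"
proof -
  obtain u where u: "u \<in> words S" "A = artin_class S M u" using A by (auto simp: carrier_ag)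
  obtain v where v: "v \<in> words S" "B = artin_class S M v" using B by (auto simp: carrier_ag)
  show ?thesis unfolding u(2) v(2) mult_class[OF u(1) v(1)]
    by (simp add: theta_class[OF cox] u(1) v(1) words_app act_app)
qed

lemma theta_gen:
  assumes cox: "coxeter_matrix S M" and x: "x \<in> S"
  shows "theta S M (artin_gen S M x) = sig S M x"
proof -
  have "[(x, True)] \<in> words S" using x by (simp add: words_def)
  then show ?thesis unfolding artin_gen_def by (simp add: theta_class[OF cox])
qed

lemma gen_carrier: "x \<in> S \<Longrightarrow> artin_gen S M x \<in> carrier (artin_group S M)"
  by (simp add: carrier_ag artin_gen_def words_def)

lemma gen_prop:
  assumes cox: "coxeter_matrix S M" and X: "X \<subseteq> S"
    and Qid: "Q id" and Qx: "\<And>x. x \<in> X \<Longrightarrow> Q (sig S M x)"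
    and Qc: "\<And>f g. Q f \<Longrightarrow> Q g \<Longrightarrow> Q (f \<circ> g)"
  shows "h \<in> parabolic S M X \<Longrightarrow> h \<in> carrier (artin_group S M) \<and> Q (theta S M h)"
  unfolding parabolic_def
proof (induction rule: generate.induct)
  case one
  have "[] \<in> words S" by (simp add: words_def)
  then have "theta S M (artin_class S M []) = id" by (simp add: theta_class[OF cox])
  moreover have "artin_class S M [] \<in> carrier (artin_group S M)" using \<open>[] \<in> words S\<close> by (simp add: carrier_ag)
  ultimately have "\<one>\<^bsub>artin_group S M\<^esub> \<in> carrier (artin_group S M)" "theta S M \<one>\<^bsub>artin_group S M\<^esub> = id"
    by (simp_all only: one_ag)
  then show ?case using Qid by (simp only: simp_thms)
next
  case (incl h)
  then obtain x where x: "x \<in> X" "h = artin_gen S M x" by auto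
  then have xS: "x \<in> S" using X by auto
  show ?case using x gen_carrier[OF xS, of M] theta_gen[OF cox xS] Qx[OF x(1)] by simp
next
  case (inv h)
  then obtain x where x: "x \<in> X" "h = artin_gen S M x" by auto
  have xS: "x \<in> S" using x X by auto
  have w: "[(x, False)] \<in> words S" using xS by (simp add: words_def)
  have "inv\<^bsub>artin_group S M\<^esub> h = artin_class S M [(x, False)]" using gen_inv(2)[OF xS] x by simp
  then show ?case using w Qx[OF x(1)] by (simp add: carrier_ag theta_class[OF cox])
next
  case (eng h1 h2)
  interpret monoid "artin_group S M" by (rule monoid_ag)
  have c: "h1 \<in> carrier (artin_group S M)" "h2 \<in> carrier (artin_group S M)" using eng.IH by auto
  have q: "Q (theta S M h1 \<circ> theta S M h2)" using eng.IH Qc by blast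
  show ?case
  proof (rule conjI)
    show "h1 \<otimes>\<^bsub>artin_group S M\<^esub> h2 \<in> carrier (artin_group S M)" by (rule m_closed[OF c])
    show "Q (theta S M (h1 \<otimes>\<^bsub>artin_group S M\<^esub> h2))" unfolding theta_mult[OF cox c] by (rule q)
  qed
qed

lemma alt_image:
  assumes cox: "coxeter_matrix S M" and hom: "\<phi> \<in> hom (artin_group S M) (artin_group S M)"
  shows "s \<in> S \<Longrightarrow> t \<in> S \<Longrightarrow> n \<ge> 1 \<Longrightarrow> theta S M (\<phi> (artin_class S M (alt_word s t n))) =
     altc (theta S M (\<phi> (artin_gen S M s))) (theta S M (\<phi> (artin_gen S M t))) n"
proof (induction n arbitrary: s t)
  case 0 then show ?case by simp
next
  case (Suc n)
  show ?case
  proof (cases n)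
    case 0
    then show ?thesis by (simp add: alt_word_Suc alt_word_def artin_gen_def)
  next
    case (Suc n')
    have w1: "[(s, True)] \<in> words S" and w2: "alt_word t s n \<in> words S"
      using Suc.prems alt_word_set[of t s n] by (auto simp: words_def)
    have c: "artin_class S M (alt_word s t (Suc n)) =
        artin_gen S M s \<otimes>\<^bsub>artin_group S M\<^esub> artin_class S M (alt_word t s n)"
      unfolding artin_gen_def mult_class[OF w1 w2] alt_word_Suc by simp
    have g1: "artin_gen S M s \<in> carrier (artin_group S M)" using gen_carrier Suc.prems by auto
    have g2: "artin_class S M (alt_word t s n) \<in> carrier (artin_group S M)" using w2 by (simp add: carrier_ag)
    have "\<phi> (artin_class S M (alt_word s t (Suc n))) =
        \<phi> (artin_gen S M s) \<otimes>\<^bsub>artin_group S M\<^esub> \<phi> (artin_class S M (alt_word t s n))"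
      unfolding c using hom g1 g2 by (simp add: hom_mult)
    moreover have "\<phi> (artin_gen S M s) \<in> carrier (artin_group S M)" using hom g1 by (simp add: hom_in_carrier)
    moreover have "\<phi> (artin_class S M (alt_word t s n)) \<in> carrier (artin_group S M)" using hom g2 by (simp add: hom_in_carrier)
    ultimately show ?thesis using theta_mult[OF cox] Suc.IH[of t s] Suc.prems \<open>n = Suc n'\<close> by simp
  qed
qed

lemma psi_rel:
  assumes cox: "coxeter_matrix S M" and hom: "\<phi> \<in> hom (artin_group S M) (artin_group S M)"
    and s: "s \<in> S" and t: "t \<in> S" and st: "s \<noteq> t" and k: "M s t = enat k"
  shows "altc (theta S M (\<phi> (artin_gen S M s))) (theta S M (\<phi> (artin_gen S M t))) k =
         altc (theta S M (\<phi> (artin_gen S M t))) (theta S M (\<phi> (artin_gen S M s))) k"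
proof -
  have k2: "k \<ge> 1" using cox s t st k unfolding coxeter_matrix_def
    by (metis One_nat_def Suc_leI enat_ord_simps(1) le_numeral_extra(4) not_le numeral_eq_enat one_le_numeral order.trans zero_less_iff_neq_zero zero_order(2))
  have "artin_rel S M ([] @ alt_word s t k @ []) ([] @ alt_word t s k @ [])"
    by (rule artin_rel.braid) (auto simp: words_def s t st k)
  then have "artin_class S M (alt_word s t k) = artin_class S M (alt_word t s k)"
    using class_eq by simp
  then show ?thesis using alt_image[OF cox hom s t k2] alt_image[OF cox hom t s k2] by simp
qed



lemma lin_scale: "lin f \<Longrightarrow> f (\<lambda>x. r * v x) = (\<lambda>x. r * f v x)"
proof -
  assume l: "lin f"
  have "f (\<lambda>x. r * v x + 0 * v x) = (\<lambda>x. r * f v x + 0 * f v x)" using l unfolding lin_def by blast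
  then show ?thesis by simp
qed

lemma lin_app: "lin f \<Longrightarrow> f (\<lambda>x. a * u x + b * v x) = (\<lambda>x. a * f u x + b * f v x)"
  unfolding lin_def by blast

lemma altc_lin: "lin f \<Longrightarrow> lin g \<Longrightarrow> lin (altc f g n)"
proof (induct n arbitrary: f g)
  case 0 then show ?case by (simp only: altc.simps lin_id)
next
  case (Suc n) then show ?case by (simp only: altc.simps) (rule lin_comp; simp)
qed

lemma altc_eig:
  "lin f \<Longrightarrow> lin g \<Longrightarrow> f v = (\<lambda>x. \<alpha> * v x) \<Longrightarrow> g v = (\<lambda>x. \<beta> * v x) \<Longrightarrow>
   altc f g n v = (\<lambda>x. \<alpha> ^ ((n + 1) div 2) * \<beta> ^ (n div 2) * v x)"
proof (induct n arbitrary: f g \<alpha> \<beta>)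
  case 0 then show ?case by simp
next
  case (Suc n)
  have ih: "altc g f n v = (\<lambda>x. \<beta> ^ ((n + 1) div 2) * \<alpha> ^ (n div 2) * v x)"
    using Suc.hyps[OF Suc.prems(2,1,4,3)] .
  have "altc f g (Suc n) v = f (\<lambda>x. (\<beta> ^ ((n + 1) div 2) * \<alpha> ^ (n div 2)) * v x)"
    using ih by (simp add: mult.assoc)
  also have "\<dots> = (\<lambda>x. (\<beta> ^ ((n + 1) div 2) * \<alpha> ^ (n div 2)) * (\<alpha> * v x))"
    using lin_scale[OF Suc.prems(1)] Suc.prems(3) by simp
  also have "\<dots> = (\<lambda>x. \<alpha> ^ ((Suc n + 1) div 2) * \<beta> ^ (Suc n div 2) * v x)"
  proof -
    have "(Suc n + 1) div 2 = Suc (n div 2)" by simp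
    moreover have "Suc n div 2 = (n + 1) div 2" by simp
    ultimately show ?thesis by (simp add: algebra_simps)
  qed
  finally show ?case .
qed

lemma Gm_even: "coxeter_matrix S M \<Longrightarrow> s \<in> S \<Longrightarrow> t \<in> S \<Longrightarrow> s \<noteq> t \<Longrightarrow> M s t = enat k \<Longrightarrow> even k \<Longrightarrow>
  Gm M t s = 0"
  using gv_sym[of S M s t] by (simp add: Gm_def gv_def)

lemma neg_pow_ne: "(- 1 :: real) ^ (Suc j) \<noteq> (- 1) ^ j"
  by (cases "even j") auto

definition Qa :: "'s \<Rightarrow> (('s \<Rightarrow> real) \<Rightarrow> ('s \<Rightarrow> real)) \<Rightarrow> bool" where
  "Qa a f \<longleftrightarrow> lin f \<and> (\<exists>\<epsilon>::real. (\<epsilon> = 1 \<or> \<epsilon> = -1) \<and> f (ev a) = (\<lambda>x. \<epsilon> * ev a x))"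

lemma QaI: "lin f \<Longrightarrow> \<epsilon> = 1 \<or> \<epsilon> = -1 \<Longrightarrow> f (ev a) = (\<lambda>x. \<epsilon> * ev a x) \<Longrightarrow> Qa a f"
  unfolding Qa_def by blast

lemma QaE: "Qa a f \<Longrightarrow> (\<And>\<epsilon>. lin f \<Longrightarrow> \<epsilon> = 1 \<or> \<epsilon> = -1 \<Longrightarrow> f (ev a) = (\<lambda>x. \<epsilon> * ev a x) \<Longrightarrow> P) \<Longrightarrow> P"
  unfolding Qa_def by blast

lemma Qa_id: "Qa a id"
  by (rule QaI[where \<epsilon>=1]) (simp_all add: lin_id)

lemma Qa_comp: "Qa a f \<Longrightarrow> Qa a g \<Longrightarrow> Qa a (f \<circ> g)"
proof -
  assume qf: "Qa a f" and qg: "Qa a g"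
  obtain e1 where lf: "lin f" and e1: "e1 = 1 \<or> e1 = -1" "f (ev a) = (\<lambda>x. e1 * ev a x)" using qf by (rule QaE)
  obtain e2 where lg: "lin g" and e2: "e2 = 1 \<or> e2 = -1" "g (ev a) = (\<lambda>x. e2 * ev a x)" using qg by (rule QaE)
  have "(f \<circ> g) (ev a) = (\<lambda>x. e2 * f (ev a) x)" using lin_scale[OF lf, of e2 "ev a"] e2(2) by simp
  also have "\<dots> = (\<lambda>x. (e1 * e2) * ev a x)" using e1(2) by (simp add: algebra_simps)
  finally have eq: "(f \<circ> g) (ev a) = (\<lambda>x. (e1 * e2) * ev a x)" .
  have cnd: "e1 * e2 = 1 \<or> e1 * e2 = -1" using e1(1) e2(1) by auto
  show ?thesis by (rule QaI[OF lin_comp[OF lf lg] cnd eq])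
qed

lemma case_odd:
  assumes cox: "coxeter_matrix S M" and a: "a \<in> S" and b: "b \<in> S" and c: "c \<in> S"
    and ab: "a \<noteq> b" and ac: "a \<noteq> c" and bc: "b \<noteq> c"
    and m1: "M a b = enat m1" "odd m1" and m2: "M a c = enat m2" "even m2"
    and m3: "M b c = enat m3" "odd m3"
    and ret: "is_retraction (artin_group S M) (parabolic S M {a, c}) \<phi>"
  shows False
proof -
  have fin: "finite S" using cox by (simp add: coxeter_matrix_def)
  have hom: "\<phi> \<in> hom (artin_group S M) (artin_group S M)" using ret by (simp add: is_retraction_def)
  have sa: "sig S M a (ev a) = (\<lambda>x. (-1) * ev a x)"
    unfolding sig_def using Lf_ev[OF fin a, of M a] by (simp add: Gm_self)
  have sc: "sig S M c (ev a) = (\<lambda>x. 1 * ev a x)"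
    unfolding sig_def using Lf_ev[OF fin a, of M c] Gm_even[OF cox a c ac m2] by simp
  have Qx: "Qa a (sig S M x)" if "x \<in> {a, c}" for x
  proof (cases "x = a")
    case True then show ?thesis using sa by (intro QaI[where \<epsilon>="-1"] sig_lin) simp_all
  next
    case False then have "x = c" using that by simp
    then show ?thesis using sc by (intro QaI[where \<epsilon>="1"] sig_lin) simp_all
  qed
  have gp: "h \<in> parabolic S M {a, c} \<Longrightarrow> h \<in> carrier (artin_group S M) \<and> Qa a (theta S M h)" for h
  proof -
    have sub: "{a, c} \<subseteq> S" using a c by simp
    show "h \<in> parabolic S M {a, c} \<Longrightarrow> h \<in> carrier (artin_group S M) \<and> Qa a (theta S M h)"
      by (rule gen_prop[where Q="Qa a", OF cox sub Qa_id Qx Qa_comp])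
  qed
  have fix_gen: "theta S M (\<phi> (artin_gen S M x)) = sig S M x" if "x \<in> {a, c}" for x
  proof -
    have "artin_gen S M x \<in> parabolic S M {a, c}" unfolding parabolic_def using that
      by (auto intro: generate.incl)
    then have "\<phi> (artin_gen S M x) = artin_gen S M x" using ret by (simp add: is_retraction_def)
    then show ?thesis using theta_gen[OF cox] that a c by auto
  qed
  define y where "y = theta S M (\<phi> (artin_gen S M b))"
  have "\<phi> (artin_gen S M b) \<in> parabolic S M {a, c}"
    using ret gen_carrier[OF b, of M] unfolding is_retraction_def by blast
  then have Qy: "Qa a y" unfolding y_def using gp by blast
  then obtain \<epsilon> :: real where ly: "lin y" and eps: "\<epsilon> = 1 \<or> \<epsilon> = -1" and ey: "y (ev a) = (\<lambda>x. \<epsilon> * ev a x)"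
    by (rule QaE)
  have r1: "altc (sig S M a) y m1 = altc y (sig S M a) m1"
    using psi_rel[OF cox hom a b ab m1(1)] fix_gen[of a] unfolding y_def by simp
  have "M c b = enat m3" using cox b c bc m3 unfolding coxeter_matrix_def by metis
  have r3: "altc (sig S M c) y m3 = altc y (sig S M c) m3"
    using psi_rel[OF cox hom c b bc[symmetric] \<open>M c b = enat m3\<close>] fix_gen[of c] unfolding y_def by simp
  have eva: "ev a a = 1" by (simp add: ev_def)
  have B1: "altc (sig S M a) y m1 (ev a) = (\<lambda>x. (-1) ^ ((m1 + 1) div 2) * \<epsilon> ^ (m1 div 2) * ev a x)"
    by (rule altc_eig[OF sig_lin ly sa ey])
  have B2: "altc y (sig S M a) m1 (ev a) = (\<lambda>x. \<epsilon> ^ ((m1 + 1) div 2) * (-1) ^ (m1 div 2) * ev a x)"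
    by (rule altc_eig[OF ly sig_lin ey sa])
  have "altc (sig S M a) y m1 (ev a) a = altc y (sig S M a) m1 (ev a) a" using r1 by simp
  then have e1: "(-1) ^ ((m1 + 1) div 2) * \<epsilon> ^ (m1 div 2) = \<epsilon> ^ ((m1 + 1) div 2) * (-1) ^ (m1 div 2)"
    unfolding B1 B2 using eva by simp
  have B3: "altc (sig S M c) y m3 (ev a) = (\<lambda>x. 1 ^ ((m3 + 1) div 2) * \<epsilon> ^ (m3 div 2) * ev a x)"
    by (rule altc_eig[OF sig_lin ly sc ey])
  have B4: "altc y (sig S M c) m3 (ev a) = (\<lambda>x. \<epsilon> ^ ((m3 + 1) div 2) * 1 ^ (m3 div 2) * ev a x)"
    by (rule altc_eig[OF ly sig_lin ey sc])
  have "altc (sig S M c) y m3 (ev a) a = altc y (sig S M c) m3 (ev a) a" using r3 by simp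
  then have e3: "\<epsilon> ^ (m3 div 2) = \<epsilon> ^ ((m3 + 1) div 2)"
    unfolding B3 B4 using eva by simp
  obtain j1 where j1: "m1 = 2 * j1 + 1" using m1(2) by (metis oddE)
  obtain j3 where j3: "m3 = 2 * j3 + 1" using m3(2) by (metis oddE)
  have d1: "(m1 + 1) div 2 = Suc j1" "m1 div 2 = j1" using j1 by simp_all
  have d3: "(m3 + 1) div 2 = Suc j3" "m3 div 2 = j3" using j3 by simp_all
  show False using eps
  proof
    assume "\<epsilon> = 1"
    then show False using e1 neg_pow_ne[of j1] unfolding d1 by simp
  next
    assume "\<epsilon> = -1"
    then show False using e3 neg_pow_ne[of j3] unfolding d3 by metis
  qed
qed



definition dl :: "'s \<Rightarrow> 's \<Rightarrow> 's \<Rightarrow> real" where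
  "dl b c = (\<lambda>x. ev b x + ev c x)"

definition vecp :: "'s \<Rightarrow> 's \<Rightarrow> real \<times> real \<Rightarrow> 's \<Rightarrow> real" where
  "vecp b c p = (\<lambda>x. fst p * ev b x + (2 * snd p) * dl b c x)"

definition comp2 :: "real \<times> real \<Rightarrow> real \<times> real \<Rightarrow> real \<times> real" where
  "comp2 p q = (fst q * fst p, fst q * snd p + snd q)"

fun altp :: "real \<times> real \<Rightarrow> real \<times> real \<Rightarrow> nat \<Rightarrow> real \<times> real" where
  "altp p q 0 = (1, 0)"
| "altp p q (Suc n) = comp2 p (altp q p n)"

lemma comp_vec:
  assumes lf: "lin f" and fd: "f (dl b c) = dl b c" and fb: "f (ev b) = vecp b c p"
    and gb: "g (ev b) = vecp b c q"
  shows "f (g (ev b)) = vecp b c (comp2 p q)"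
proof -
  have "f (g (ev b)) = f (\<lambda>x. fst q * ev b x + (2 * snd q) * dl b c x)" using gb by (simp add: vecp_def)
  also have "\<dots> = (\<lambda>x. fst q * f (ev b) x + (2 * snd q) * f (dl b c) x)" by (rule lin_app[OF lf])
  also have "\<dots> = vecp b c (comp2 p q)" unfolding fd fb by (simp add: vecp_def comp2_def algebra_simps)
  finally show ?thesis .
qed

lemma altc_vec:
  "lin f \<Longrightarrow> lin g \<Longrightarrow> f (dl b c) = dl b c \<Longrightarrow> g (dl b c) = dl b c \<Longrightarrow>
   f (ev b) = vecp b c p \<Longrightarrow> g (ev b) = vecp b c q \<Longrightarrow>
   altc f g n (ev b) = vecp b c (altp p q n) \<and> altc f g n (dl b c) = dl b c"
proof (induct n arbitrary: f g p q)
  case 0 then show ?case by (simp add: vecp_def)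
next
  case (Suc n)
  have ih: "altc g f n (ev b) = vecp b c (altp q p n) \<and> altc g f n (dl b c) = dl b c"
    using Suc.hyps[OF Suc.prems(2,1,4,3,6,5)] .
  have "altc f g (Suc n) (ev b) = f (altc g f n (ev b))" by simp
  also have "\<dots> = vecp b c (comp2 p (altp q p n))"
    using comp_vec[OF Suc.prems(1,3,5), of "altc g f n"] ih by blast
  finally show ?case using ih Suc.prems(3) by simp
qed

lemma vecp_inj: "b \<noteq> c \<Longrightarrow> vecp b c p = vecp b c q \<Longrightarrow> p = q"
proof -
  assume bc: "b \<noteq> c" and e: "vecp b c p = vecp b c q"
  have 1: "vecp b c p c = vecp b c q c" using e by simp
  have 2: "vecp b c p b = vecp b c q b" using e by simp
  have "snd p = snd q" using 1 bc by (simp add: vecp_def dl_def ev_def)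
  moreover have "fst p = fst q" using 2 bc calculation by (simp add: vecp_def dl_def ev_def)
  ultimately show ?thesis by (simp add: prod_eq_iff)
qed

lemma altp_fst: "fst (altp p q n) = fst p ^ ((n + 1) div 2) * fst q ^ (n div 2)"
proof (induct n arbitrary: p q)
  case 0 then show ?case by simp
next
  case (Suc n)
  have "(Suc n + 1) div 2 = Suc (n div 2)" by simp
  moreover have "Suc n div 2 = (n + 1) div 2" by simp
  ultimately show ?case using Suc[of q p] by (simp add: comp2_def algebra_simps)
qed

lemma altp_refl: "altp (-1, a) (-1, b) n =
  (if even n then (1, real (n div 2) * (b - a)) else (-1, real (n div 2 + 1) * a - real (n div 2) * b))"
proof (induct n arbitrary: a b)
  case 0 then show ?case by simp
next
  case (Suc n)
  show ?case
  proof (cases "even n")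
    case True
    then have "Suc n div 2 = n div 2" by presburger
    then show ?thesis using Suc[of b a] True by (simp add: comp2_def algebra_simps)
  next
    case False
    then have "Suc n div 2 = n div 2 + 1" by presburger
    then show ?thesis using Suc[of b a] False by (simp add: comp2_def algebra_simps)
  qed
qed



definition Qb :: "'s \<Rightarrow> 's \<Rightarrow> (('s \<Rightarrow> real) \<Rightarrow> ('s \<Rightarrow> real)) \<Rightarrow> bool" where
  "Qb b c f \<longleftrightarrow> lin f \<and> f (dl b c) = dl b c \<and> (\<exists>p. (fst p = 1 \<or> fst p = -1) \<and> f (ev b) = vecp b c p)"

lemma QbI: "lin f \<Longrightarrow> f (dl b c) = dl b c \<Longrightarrow> fst p = 1 \<or> fst p = -1 \<Longrightarrow> f (ev b) = vecp b c p \<Longrightarrow> Qb b c f"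
  unfolding Qb_def by blast

lemma QbE: "Qb b c f \<Longrightarrow> (\<And>p. lin f \<Longrightarrow> f (dl b c) = dl b c \<Longrightarrow> fst p = 1 \<or> fst p = -1 \<Longrightarrow> f (ev b) = vecp b c p \<Longrightarrow> P) \<Longrightarrow> P"
  unfolding Qb_def by blast

lemma Qb_id: "Qb b c id"
  by (rule QbI[where p="(1, 0)"]) (simp_all add: lin_id vecp_def)

lemma Qb_comp: "Qb b c f \<Longrightarrow> Qb b c g \<Longrightarrow> Qb b c (f \<circ> g)"
proof -
  assume qf: "Qb b c f" and qg: "Qb b c g"
  obtain p where lf: "lin f" and fd: "f (dl b c) = dl b c" and p: "fst p = 1 \<or> fst p = -1" "f (ev b) = vecp b c p"
    using qf by (rule QbE)
  obtain q where lg: "lin g" and gd: "g (dl b c) = dl b c" and q: "fst q = 1 \<or> fst q = -1" "g (ev b) = vecp b c q"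
    using qg by (rule QbE)
  have eq: "(f \<circ> g) (ev b) = vecp b c (comp2 p q)" using comp_vec[where b=b and c=c and f=f and g=g, OF lf fd p(2) q(2)] by simp
  have dd: "(f \<circ> g) (dl b c) = dl b c" using fd gd by simp
  have cnd: "fst (comp2 p q) = 1 \<or> fst (comp2 p q) = -1" using p(1) q(1) by (auto simp: comp2_def)
  show ?thesis by (rule QbI[OF lin_comp[OF lf lg] dd cnd eq])
qed

lemma case_inf:
  assumes cox: "coxeter_matrix S M" and a: "a \<in> S" and b: "b \<in> S" and c: "c \<in> S"
    and ab: "a \<noteq> b" and ac: "a \<noteq> c" and bc: "b \<noteq> c"
    and m1: "M a b = enat m1" "odd m1" and m2: "M a c = enat m2" "even m2"
    and m3: "M b c = \<infinity>"
    and ret: "is_retraction (artin_group S M) (parabolic S M {b, c}) \<phi>"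
  shows False
proof -
  have fin: "finite S" using cox by (simp add: coxeter_matrix_def)
  have hom: "\<phi> \<in> hom (artin_group S M) (artin_group S M)" using ret by (simp add: is_retraction_def)
  have m22: "m2 \<ge> 2" using cox a c ac m2(1) unfolding coxeter_matrix_def
    by (metis enat_ord_simps(1) numeral_eq_enat)
  have gbc: "Gm M b c = -1" using bc m3 by (simp add: Gm_def gv_def)
  have gcb: "Gm M c b = -1" using gbc gv_sym[OF cox b c] by simp
  have dle: "dl b c = (\<lambda>x. 1 * ev b x + 1 * ev c x)" by (simp add: dl_def)
  have Lbd: "Lf S M b (dl b c) = 0" unfolding dle Lf_lin Lf_ev[OF fin b] Lf_ev[OF fin c] gbc by (simp add: Gm_self)
  have Lcd: "Lf S M c (dl b c) = 0" unfolding dle Lf_lin Lf_ev[OF fin b] Lf_ev[OF fin c] gcb by (simp add: Gm_self)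
  have sbd: "sig S M b (dl b c) = dl b c" unfolding sig_def Lbd by simp
  have scd: "sig S M c (dl b c) = dl b c" unfolding sig_def Lcd by simp
  have sbb: "sig S M b (ev b) = vecp b c (-1, 0)"
    unfolding sig_def Lf_ev[OF fin b] by (simp add: Gm_self vecp_def fun_eq_iff)
  have scb: "sig S M c (ev b) = vecp b c (-1, 1)"
    unfolding sig_def Lf_ev[OF fin b] gcb by (simp add: vecp_def dl_def fun_eq_iff algebra_simps)
  have Qx: "Qb b c (sig S M x)" if "x \<in> {b, c}" for x
  proof (cases "x = b")
    case True then show ?thesis using sbd sbb by (intro QbI[where p="(-1, 0)"] sig_lin) simp_all
  next
    case False then have "x = c" using that by simp
    then show ?thesis using scd scb by (intro QbI[where p="(-1, 1)"] sig_lin) simp_all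
  qed
  have gp: "h \<in> parabolic S M {b, c} \<Longrightarrow> h \<in> carrier (artin_group S M) \<and> Qb b c (theta S M h)" for h
  proof -
    have sub: "{b, c} \<subseteq> S" using b c by simp
    show "h \<in> parabolic S M {b, c} \<Longrightarrow> h \<in> carrier (artin_group S M) \<and> Qb b c (theta S M h)"
      by (rule gen_prop[where Q="Qb b c", OF cox sub Qb_id Qx Qb_comp])
  qed
  have fix_gen: "theta S M (\<phi> (artin_gen S M x)) = sig S M x" if "x \<in> {b, c}" for x
  proof -
    have "artin_gen S M x \<in> parabolic S M {b, c}" unfolding parabolic_def using that
      by (auto intro: generate.incl)
    then have "\<phi> (artin_gen S M x) = artin_gen S M x" using ret by (simp add: is_retraction_def)
    then show ?thesis using theta_gen[OF cox] that b c by auto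
  qed
  define y where "y = theta S M (\<phi> (artin_gen S M a))"
  have "\<phi> (artin_gen S M a) \<in> parabolic S M {b, c}"
    using ret gen_carrier[OF a, of M] unfolding is_retraction_def by blast
  then have Qy: "Qb b c y" unfolding y_def using gp by blast
  then obtain p where ly: "lin y" and yd: "y (dl b c) = dl b c" and pp: "fst p = 1 \<or> fst p = -1"
     and yb: "y (ev b) = vecp b c p"
    by (rule QbE)
  have r1: "altc y (sig S M b) m1 = altc (sig S M b) y m1"
    using psi_rel[OF cox hom a b ab m1(1)] fix_gen[of b] unfolding y_def by simp
  have r2: "altc y (sig S M c) m2 = altc (sig S M c) y m2"
    using psi_rel[OF cox hom a c ac m2(1)] fix_gen[of c] unfolding y_def by simp
  have "vecp b c (altp p (-1, 0) m1) = vecp b c (altp (-1, 0) p m1)"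
    using altc_vec[OF ly sig_lin yd sbd yb sbb, of m1] altc_vec[OF sig_lin ly sbd yd sbb yb, of m1] r1
    by metis
  then have q1: "altp p (-1, 0) m1 = altp (-1, 0) p m1" by (rule vecp_inj[OF bc])
  have "vecp b c (altp p (-1, 1) m2) = vecp b c (altp (-1, 1) p m2)"
    using altc_vec[OF ly sig_lin yd scd yb scb, of m2] altc_vec[OF sig_lin ly scd yd scb yb, of m2] r2
    by metis
  then have q2: "altp p (-1, 1) m2 = altp (-1, 1) p m2" by (rule vecp_inj[OF bc])
  obtain j1 where j1: "m1 = 2 * j1 + 1" using m1(2) by (metis oddE)
  obtain i where i: "m2 = 2 * i" using m2(2) by blast
  have i1: "i \<ge> 1" using m22 i by simp
  have d1: "(m1 + 1) div 2 = Suc j1" "m1 div 2 = j1" using j1 by simp_all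
  show False using pp
  proof
    assume p1: "fst p = 1"
    have "fst (altp p (-1, 0) m1) = fst (altp (-1, 0) p m1)" using q1 by simp
    then have "(-1 :: real) ^ j1 = (-1) ^ Suc j1" unfolding altp_fst d1 p1 by simp
    then show False using neg_pow_ne[of j1] by simp
  next
    assume p1: "fst p = -1"
    obtain k where pk: "p = (-1, k)" using p1 by (metis prod.collapse)
    have "altp (-1, k) (-1, 0) m1 = altp (-1, 0) (-1, k) m1" using q1 pk by simp
    then have "real (j1 + 1) * k = - (real j1 * k)" unfolding altp_refl using j1 by simp
    then have "(2 * real j1 + 1) * k = 0" by (simp add: algebra_simps)
    then have k0: "k = 0" by (metis add_nonneg_pos mult_eq_0_iff not_real_square_gt_zero of_nat_0_le_iff zero_less_one mult_nonneg_nonneg zero_le_numeral)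
    have "altp (-1, 0) (-1, 1) m2 = altp (-1, 1) (-1, 0) m2" using q2 pk k0 by simp
    then have "real i = - real i" unfolding altp_refl using i by simp
    then show False using i1 by simp
  qed
qed



theorem lemma3p3:
  fixes S :: "'s set" and M :: "'s \<Rightarrow> 's \<Rightarrow> enat" and a b c :: 's
  assumes "coxeter_matrix S M"
    and "parabolic_retractable S M"
    and "a \<in> S" and "b \<in> S" and "c \<in> S"
    and "a \<noteq> b" and "a \<noteq> c" and "b \<noteq> c"
    and "odd_entry (M a b)" and "even_entry (M a c)"
  shows "even_entry (M b c)"
proof (rule ccontr)
  assume ne: "\<not> even_entry (M b c)"
  obtain m1 where m1: "M a b = enat m1" "odd m1" using assms(9) unfolding odd_entry_def by blast
  obtain m2 where m2: "M a c = enat m2" "even m2" using assms(10) unfolding even_entry_def by blast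
  have s1: "{a, c} \<subseteq> S" and s2: "{b, c} \<subseteq> S" using assms(3-5) by auto
  obtain \<phi>1 where r1: "is_retraction (artin_group S M) (parabolic S M {a, c}) \<phi>1"
    using assms(2) s1 unfolding parabolic_retractable_def by blast
  obtain \<phi>2 where r2: "is_retraction (artin_group S M) (parabolic S M {b, c}) \<phi>2"
    using assms(2) s2 unfolding parabolic_retractable_def by blast
  show False
  proof (cases "M b c")
    case (enat m3)
    then have "odd m3" using ne unfolding even_entry_def by blast
    then show False using case_odd[OF assms(1,3,4,5,6,7,8) m1 m2 enat _ r1] by blast
  next
    case infinity
    then show False using case_inf[OF assms(1,3,4,5,6,7,8) m1 m2 infinity r2] by blast
  qed
qed

end
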